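(* Let $T[n]$ be a standard Young tableau with exactly two rows, and let $T$ denote its second row, with entries $t_1<t_2<\dots<t_m$. Then during one promotion step applied to $T[n]$, the $k$-th entry $t_k$ of $T$ slides from the second row into the top row if and only if $t_k=2k$ and there is no $i<k$ with $t_i=2i$.
   Context: For a tableau $T$ with distinct positive entries, $T[n]$ is obtained by placing above $T$ a top row consisting of all elements of $\{1,\dots,n\}$ not in $T$, in increasing order. Promotion of a tableau with distinct entries $i_1<\dots<i_m$: (1) remove the top-left entry, leaving an empty box; (2) while the empty box has a box to its right or below, slide into it the smaller of the entries of those boxes (jeu-de-taquin slides); (3) then replace each remaining entry $i_k$ by $i_{k-1}$; (4) place $i_m$ in the empty box. "Slides into the top row" refers to a slide in step (2) moving an entry from the second row up into the first row. *)

theory Defs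
  imports Main
begin

text \<open>A tableau with two rows is represented by its two rows as lists
  (row 1 on top, row 2 below), left-justified.\<close>

definition top_row :: "nat \<Rightarrow> nat list \<Rightarrow> nat list" where
  "top_row n T = sorted_list_of_set ({1..n} - set T)"

definition two_row_SYT :: "nat \<Rightarrow> nat list \<Rightarrow> bool" where
  "two_row_SYT n T \<longleftrightarrow>
     sorted_wrt (<) T \<and> set T \<subseteq> {1..n} \<and> T \<noteq> [] \<and>
     length T \<le> length (top_row n T) \<and>
     (\<forall>j < length T. top_row n T ! j < T ! j)"

text \<open>Jeu-de-taquin phase of promotion while the empty box is in the top row.
  Arguments: the top-row entries strictly to the right of the empty box, and
  the second-row entries from the column of the empty box onwards.
  If the entry below is smaller than the entry to the right (or there is no
  entry to the right), the entry below slides up into the top row: the result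
  is Some j, meaning the j-th (0-based) entry of the given second-row list
  slides up.  Otherwise the right entry slides left and the empty box moves
  one column right.  None means no entry slides from the second row into
  the top row.\<close>
fun jdt_top :: "nat list \<Rightarrow> nat list \<Rightarrow> nat option" where
  "jdt_top as [] = None"
| "jdt_top [] (b # bs) = Some 0"
| "jdt_top (a # as) (b # bs) =
     (if b < a then Some 0 else map_option Suc (jdt_top as bs))"

text \<open>During promotion of T[n], the top-left entry is removed from the top row,
  so the empty box starts in column 1 with the rest of the top row to its right
  and the whole second row T starting below it. The k-th (1-based) entry of T
  slides into the top row.\<close>
definition slides_up :: "nat \<Rightarrow> nat list \<Rightarrow> nat \<Rightarrow> bool" where
  "slides_up n T k \<longleftrightarrow> jdt_top (tl (top_row n T)) T = Some (k - 1)"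

end

theory Submission
  imports Defs
begin

lemma jdt_top_iff:
  "jdt_top as bs = Some i \<longleftrightarrow>
     i < length bs \<and> (length as \<le> i \<or> bs ! i < as ! i) \<and>
     (\<forall>l<i. \<not> (length as \<le> l \<or> bs ! l < as ! l))"
proof (induction as bs arbitrary: i rule: jdt_top.induct)
  case (1 as)
  then show ?case by simp
next
  case (2 b bs)
  then show ?case by (cases i) auto
next
  case (3 a as b bs)
  show ?case
  proof (cases "b < a")
    case True
    then show ?thesis by (cases i) auto
  next
    case False
    show ?thesis
    proof (cases i)
      case 0
      then show ?thesis using False by auto
    next
      case (Suc i')
      have "(\<forall>l<Suc i'. \<not> (length (a#as) \<le> l \<or> (b#bs) ! l < (a#as) ! l)) \<longleftrightarrow>
            \<not> b < a \<and> (\<forall>l<i'. \<not> (length as \<le> l \<or> bs ! l < as ! l))"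
        by (auto simp: less_Suc_eq_0_disj)
      then show ?thesis using False Suc "3.IH"[OF False, of i'] by auto
    qed
  qed
qed

lemma card_le_nth:
  fixes xs :: "nat list"
  assumes "sorted_wrt (<) xs" "i < length xs"
  shows "card {x \<in> set xs. x \<le> xs ! i} = Suc i"
proof -
  have "{x \<in> set xs. x \<le> xs ! i} = set (take (Suc i) xs)"
  proof
    show "{x \<in> set xs. x \<le> xs ! i} \<subseteq> set (take (Suc i) xs)"
    proof
      fix x assume "x \<in> {x \<in> set xs. x \<le> xs ! i}"
      then obtain l where l: "l < length xs" "x = xs ! l" "xs ! l \<le> xs ! i"
        by (auto simp: in_set_conv_nth)
      have "l \<le> i"
      proof (rule ccontr)
        assume "\<not> l \<le> i"
        then have "xs ! i < xs ! l" using assms l by (simp add: sorted_wrt_iff_nth_less)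
        then show False using l(3) by (meson leD)
      qed
      then show "x \<in> set (take (Suc i) xs)" using l
        by (auto simp: in_set_conv_nth intro!: exI[of _ l])
    qed
  next
    show "set (take (Suc i) xs) \<subseteq> {x \<in> set xs. x \<le> xs ! i}"
    proof
      fix x assume "x \<in> set (take (Suc i) xs)"
      then obtain l where l: "l < Suc i" "l < length xs" "x = xs ! l"
        by (auto simp: in_set_conv_nth)
      have "xs ! l \<le> xs ! i"
      proof (cases "l = i")
        case False
        then have "l < i" using l by linarith
        then show ?thesis using assms l by (auto simp: sorted_wrt_iff_nth_less less_imp_le)
      qed simp
      then show "x \<in> {x \<in> set xs. x \<le> xs ! i}" using l by auto
    qed
  qed
  moreover have "distinct xs" using assms(1) by (simp add: strict_sorted_iff)
  ultimately show ?thesis using assms(2) by (simp add: distinct_card)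
qed

lemma key:
  assumes syt: "two_row_SYT n T" and j: "j < length T"
  shows "(length (top_row n T) \<le> Suc j \<or> T ! j < top_row n T ! Suc j) \<longleftrightarrow> T ! j = 2 * Suc j"
proof -
  define A where "A = top_row n T"
  define t where "t = T ! j"
  have sT: "sorted_wrt (<) T" and sub: "set T \<subseteq> {1..n}" and lenA: "length T \<le> length A"
    and col: "\<forall>j < length T. A ! j < T ! j"
    using syt by (auto simp: two_row_SYT_def A_def)
  have setA: "set A = {1..n} - set T" by (simp add: A_def top_row_def)
  have sA: "sorted_wrt (<) A" by (simp add: A_def top_row_def)
  have jA: "j < length A" using j lenA by simp
  have Ajt: "A ! j < t" using col j t_def by simp
  have tin: "t \<in> set T" using j t_def by simp
  then have t1n: "1 \<le> t" "t \<le> n" using sub by auto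
  have split: "{1..t} = {x \<in> set T. x \<le> t} \<union> {x \<in> set A. x \<le> t}"
    using t1n sub setA by auto
  have disj: "{x \<in> set T. x \<le> t} \<inter> {x \<in> set A. x \<le> t} = {}" using setA by auto
  have cT: "card {x \<in> set T. x \<le> t} = Suc j" using card_le_nth[OF sT j] t_def by simp
  have "card {1..t} = card {x \<in> set T. x \<le> t} + card {x \<in> set A. x \<le> t}"
    unfolding split by (rule card_Un_disjoint) (use disj in auto)
  then have tc: "t = Suc j + card {x \<in> set A. x \<le> t}" using cT by simp
  have cAj: "card {x \<in> set A. x \<le> A ! j} = Suc j" using card_le_nth[OF sA jA] .
  show ?thesis
  proof (cases "length A \<le> Suc j \<or> t < A ! Suc j")
    case True
    have "{x \<in> set A. x \<le> t} = {x \<in> set A. x \<le> A ! j}"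
    proof -
      have "x \<le> A ! j" if xA: "x \<in> set A" and xt: "x \<le> t" for x
      proof -
        obtain l where l: "l < length A" "x = A ! l" using xA by (auto simp: in_set_conv_nth)
        show ?thesis
        proof (rule ccontr)
          assume "\<not> x \<le> A ! j"
          then have "j < l"
          proof (rule contrapos_np)
            assume "\<not> j < l"
            then have "l = j \<or> l < j" by linarith
            then show "x \<le> A ! j" using l sA jA by (auto simp: sorted_wrt_iff_nth_less less_imp_le)
          qed
          then have "Suc j < length A" using l by linarith
          moreover have "A ! Suc j \<le> A ! l"
          proof (cases "Suc j = l")
            case False
            then have "Suc j < l" using \<open>j < l\<close> by linarith
            then show ?thesis using l sA by (auto simp: sorted_wrt_iff_nth_less less_imp_le)
          qed simp
          ultimately show False using True l xt by auto
        qed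
      qed
      then show ?thesis using Ajt by auto
    qed
    then have "t = 2 * Suc j" using tc cAj by simp
    then show ?thesis using True by (simp add: A_def t_def)
  next
    case False
    then have SjA: "Suc j < length A" and le: "A ! Suc j \<le> t" by auto
    have "{x \<in> set A. x \<le> A ! Suc j} \<subseteq> {x \<in> set A. x \<le> t}" using le by auto
    then have "card {x \<in> set A. x \<le> A ! Suc j} \<le> card {x \<in> set A. x \<le> t}"
      by (rule card_mono[rotated]) simp
    then have "Suc (Suc j) \<le> card {x \<in> set A. x \<le> t}" using card_le_nth[OF sA SjA] by simp
    then show ?thesis using False tc \<open>Suc (Suc j) \<le> _\<close> by (simp add: A_def t_def)
  qed
qed

theorem lemma4p3:
  fixes n k :: nat and T :: "nat list"
  assumes "two_row_SYT n T"
    and "1 \<le> k" and "k \<le> length T"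
  shows "slides_up n T k \<longleftrightarrow>
           (T ! (k - 1) = 2 * k \<and> \<not> (\<exists>i. 1 \<le> i \<and> i < k \<and> T ! (i - 1) = 2 * i))"
proof -
  define A where "A = top_row n T"
  have P: "(length (tl A) \<le> l \<or> T ! l < tl A ! l) \<longleftrightarrow> T ! l = 2 * Suc l"
    if "l < length T" for l
  proof -
    have "(length (tl A) \<le> l \<or> T ! l < tl A ! l) \<longleftrightarrow>
          (length A \<le> Suc l \<or> T ! l < A ! Suc l)"
      by (cases A) auto
    then show ?thesis using key[OF assms(1) that] by (simp add: A_def)
  qed
  have "slides_up n T k \<longleftrightarrow>
     (length (tl A) \<le> k - 1 \<or> T ! (k - 1) < tl A ! (k - 1)) \<and>
     (\<forall>l<k - 1. \<not> (length (tl A) \<le> l \<or> T ! l < tl A ! l))"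
    using assms by (auto simp: slides_up_def jdt_top_iff A_def)
  also have "\<dots> \<longleftrightarrow> T ! (k - 1) = 2 * k \<and> (\<forall>l<k - 1. T ! l \<noteq> 2 * Suc l)"
    using P assms by auto
  also have "(\<forall>l<k - 1. T ! l \<noteq> 2 * Suc l) \<longleftrightarrow> \<not> (\<exists>i. 1 \<le> i \<and> i < k \<and> T ! (i - 1) = 2 * i)"
  proof
    assume h: "\<forall>l<k - 1. T ! l \<noteq> 2 * Suc l"
    show "\<not> (\<exists>i. 1 \<le> i \<and> i < k \<and> T ! (i - 1) = 2 * i)"
    proof
      assume "\<exists>i. 1 \<le> i \<and> i < k \<and> T ! (i - 1) = 2 * i"
      then obtain i where "1 \<le> i" "i < k" "T ! (i - 1) = 2 * i" by blast
      moreover have "i - 1 < k - 1" using \<open>1 \<le> i\<close> \<open>i < k\<close> by linarith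
      then have "T ! (i - 1) \<noteq> 2 * Suc (i - 1)" using h by blast
      moreover have "Suc (i - 1) = i" using \<open>1 \<le> i\<close> by simp
      ultimately show False using \<open>T ! (i - 1) = 2 * i\<close> by simp
    qed
  next
    assume h: "\<not> (\<exists>i. 1 \<le> i \<and> i < k \<and> T ! (i - 1) = 2 * i)"
    show "\<forall>l<k - 1. T ! l \<noteq> 2 * Suc l"
    proof (intro allI impI)
      fix l assume "l < k - 1"
      then have "1 \<le> Suc l" "Suc l < k" by linarith+
      moreover have "\<not> (1 \<le> Suc l \<and> Suc l < k \<and> T ! (Suc l - 1) = 2 * Suc l)" using h by blast
      ultimately show "T ! l \<noteq> 2 * Suc l" by simp
    qed
  qed
  finally show ?thesis .
qed

end
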